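(* Let $\mathcal{X}\subseteq\mathbb{R}^d$ and let $k:\mathbb{R}^d\to\mathbb{R}$ be a continuous positive-definite function with $k(0)=1$; write $k(x,y):=k(x-y)$. Let $P$ be the probability measure on $\mathbb{R}^d$ with $k(\Delta)=\int e^{\sqrt{-1}\,\omega^\mathsf{T}\Delta}\,\mathrm{d}P(\omega)$. Let $\mu$ be a $\sigma$-finite measure on $\mathcal{X}\times\mathcal{X}$, for measurable $g$ on $\mathcal{X}^2$ set $\|g\|_\mu^2:=\int_{\mathcal{X}^2}g(x,y)^2\,\mathrm{d}\mu(x,y)$, and let $\mathcal{M}:=\mu(\mathcal{X}^2)$. Let $D$ be a positive integer, let $\omega_1,\dots,\omega_D$ be i.i.d. with law $P$ and $b_1,\dots,b_D$ i.i.d. uniform on $[0,2\pi]$, independent of the $\omega_i$, define $$\breve z(x):=\sqrt{\tfrac{2}{D}}\,\big(\cos(\omega_1^\mathsf{T}x+b_1),\dots,\cos(\omega_D^\mathsf{T}x+b_D)\big)^\mathsf{T},$$ and $\breve f(x,y):=\breve z(x)^\mathsf{T}\breve z(y)-k(x-y)$. Then for every $\varepsilon>0$, $$\Pr\Big(\big|\|\breve f\|_\mu^2-\mathbb{E}\|\breve f\|_\mu^2\big|\ge\varepsilon\Big)\le 2\exp\Big(\frac{-D^3\varepsilon^2}{512(D+1)^2\mathcal{M}^2}\Big)\le 2\exp\Big(\frac{-D\varepsilon^2}{2048\,\mathcal{M}^2}\Big).$$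
   Context: The existence of $P$ follows from Bochner's theorem. The probability and expectation are over the random draw of the $\omega_i$ and $b_i$. *)

theory Defs
  imports "HOL-Probability.Probability"
begin

definition positive_definite :: "('a::real_vector \<Rightarrow> real) \<Rightarrow> bool" where
  "positive_definite k \<longleftrightarrow>
     (\<forall>(n::nat) (x::nat \<Rightarrow> 'a) (c::nat \<Rightarrow> complex).
        (let s = (\<Sum>i<n. \<Sum>j<n. c i * cnj (c j) * complex_of_real (k (x i - x j)))
         in Im s = 0 \<and> 0 \<le> Re s))"

definition rff_space :: "'a::euclidean_space measure \<Rightarrow> nat \<Rightarrow> ((nat \<Rightarrow> 'a) \<times> (nat \<Rightarrow> real)) measure" where
  "rff_space P D =
     (PiM {..<D} (\<lambda>_. P)) \<Otimes>\<^sub>M (PiM {..<D} (\<lambda>_. uniform_measure lborel {0..2*pi}))"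

definition rff_z :: "nat \<Rightarrow> (nat \<Rightarrow> 'a::euclidean_space) \<times> (nat \<Rightarrow> real) \<Rightarrow> 'a \<Rightarrow> nat \<Rightarrow> real" where
  "rff_z D w x i = sqrt (2 / real D) * cos (fst w i \<bullet> x + snd w i)"

definition rff_f :: "('a::euclidean_space \<Rightarrow> real) \<Rightarrow> nat \<Rightarrow> (nat \<Rightarrow> 'a) \<times> (nat \<Rightarrow> real) \<Rightarrow> 'a \<times> 'a \<Rightarrow> real" where
  "rff_f k D w p = (\<Sum>i<D. rff_z D w (fst p) i * rff_z D w (snd p) i) - k (fst p - snd p)"

definition sqnorm_mu :: "('b \<times> 'b) measure \<Rightarrow> ('b \<times> 'b \<Rightarrow> real) \<Rightarrow> real" where
  "sqnorm_mu \<mu> g = (\<integral>p. (g p)\<^sup>2 \<partial>\<mu>)"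

end

theory Submission
  imports Defs "HOL-Probability.Probability"
begin


definition mgf_bd :: "'a measure \<Rightarrow> ('a \<Rightarrow> real) \<Rightarrow> real \<Rightarrow> bool" where
  "mgf_bd M f s \<longleftrightarrow> (\<forall>l::real. (\<integral>x. exp (l * (f x - (\<integral>y. f y \<partial>M))) \<partial>M) \<le> exp (l\<^sup>2 * s / 8))"

lemma pfm: "prob_space M \<Longrightarrow> finite_measure M"
  by (simp add: prob_space_def)

lemma bnd_int:
  fixes f :: "'a \<Rightarrow> real"
  assumes "finite_measure M" "f \<in> borel_measurable M" "\<And>x. x \<in> space M \<Longrightarrow> \<bar>f x\<bar> \<le> B"
  shows "integrable M f"
proof -
  interpret finite_measure M by fact
  show ?thesis using assms(2,3) by (intro integrable_const_bound[where B=B]) auto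
qed

lemma int_abs_le:
  fixes f :: "'a \<Rightarrow> real"
  assumes "prob_space M" "f \<in> borel_measurable M" "\<And>x. x \<in> space M \<Longrightarrow> \<bar>f x\<bar> \<le> B"
  shows "\<bar>\<integral>x. f x \<partial>M\<bar> \<le> B"
proof -
  interpret prob_space M by fact
  have i: "integrable M f" using assms by (intro bnd_int) (auto simp: finite_measure_axioms)
  have "\<bar>\<integral>x. f x \<partial>M\<bar> \<le> (\<integral>x. \<bar>f x\<bar> \<partial>M)" by (rule integral_abs_bound)
  also have "\<dots> \<le> (\<integral>x. B \<partial>M)" using i assms(3) by (intro integral_mono) auto
  also have "\<dots> = B" by (simp add: prob_space)
  finally show ?thesis .
qed

lemma step_S:
  fixes f :: "'a \<times> 'b \<Rightarrow> real"
  assumes P1: "prob_space M1" and P2: "prob_space M2"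
    and fm[measurable]: "f \<in> borel_measurable (M1 \<Otimes>\<^sub>M M2)"
    and fb: "\<And>z. z \<in> space (M1 \<Otimes>\<^sub>M M2) \<Longrightarrow> \<bar>f z\<bar> \<le> B"
    and inner: "\<And>y. y \<in> space M2 \<Longrightarrow> mgf_bd M1 (\<lambda>x. f (x, y)) s1"
    and outer: "mgf_bd M2 (\<lambda>y. \<integral>x. f (x, y) \<partial>M1) s2"
  shows "mgf_bd (M1 \<Otimes>\<^sub>M M2) f (s1 + s2)"
  unfolding mgf_bd_def
proof
  fix l :: real
  interpret p1: prob_space M1 by fact
  interpret p2: prob_space M2 by fact
  interpret pp: pair_prob_space M1 M2 by unfold_locales
  have PQ: "prob_space (M1 \<Otimes>\<^sub>M M2)" by (rule prob_space_pair) (fact P1, fact P2)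
  define h where "h y = (\<integral>x. f (x, y) \<partial>M1)" for y
  have hm[measurable]: "h \<in> borel_measurable M2" unfolding h_def by measurable
  have hb: "\<bar>h y\<bar> \<le> B" if "y \<in> space M2" for y
    unfolding h_def using that fb P1 by (intro int_abs_le) (auto simp: space_pair_measure)
  have fint: "integrable (M1 \<Otimes>\<^sub>M M2) f"
    using fb by (intro bnd_int) (auto simp: pfm[OF PQ])
  define E where "E = (\<integral>z. f z \<partial>(M1 \<Otimes>\<^sub>M M2))"
  have Eh: "(\<integral>y. h y \<partial>M2) = E"
    unfolding h_def E_def using pp.integral_snd[of "\<lambda>x y. f (x,y)"] fint by simp
  have Eb: "\<bar>E\<bar> \<le> B" unfolding E_def using fb by (intro int_abs_le) (auto simp: PQ)
  have gint: "integrable (M1 \<Otimes>\<^sub>M M2) (\<lambda>z. exp (l * (f z - E)))"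
  proof (rule bnd_int[where B="exp (\<bar>l\<bar> * (2*B))"])
    fix z assume z: "z \<in> space (M1 \<Otimes>\<^sub>M M2)"
    have "l * (f z - E) \<le> \<bar>l\<bar> * \<bar>f z - E\<bar>" by (metis abs_ge_self abs_mult)
    also have "\<dots> \<le> \<bar>l\<bar> * (2*B)" using fb[OF z] Eb by (intro mult_left_mono) auto
    finally show "\<bar>exp (l * (f z - E))\<bar> \<le> exp (\<bar>l\<bar> * (2*B))" by simp
  qed (simp_all add: pfm[OF PQ])
  have "(\<integral>z. exp (l * (f z - E)) \<partial>(M1 \<Otimes>\<^sub>M M2)) = (\<integral>y. (\<integral>x. exp (l * (f (x,y) - E)) \<partial>M1) \<partial>M2)"
    using pp.integral_snd[of "\<lambda>x y. exp (l * (f (x,y) - E))"] gint by (simp add: case_prod_unfold)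
  also have "\<dots> \<le> (\<integral>y. exp (l * (h y - E)) * exp (l\<^sup>2 * s1 / 8) \<partial>M2)"
  proof (rule integral_mono)
    show "integrable M2 (\<lambda>y. \<integral>x. exp (l * (f (x, y) - E)) \<partial>M1)"
      using pp.integrable_snd[of "\<lambda>x y. exp (l * (f (x,y) - E))"] gint by (simp add: case_prod_unfold)
    show "integrable M2 (\<lambda>y. exp (l * (h y - E)) * exp (l\<^sup>2 * s1 / 8))"
    proof (rule bnd_int[where B="exp (\<bar>l\<bar> * (2*B)) * exp (l\<^sup>2 * s1 / 8)"])
      fix y assume y: "y \<in> space M2"
      have "l * (h y - E) \<le> \<bar>l\<bar> * \<bar>h y - E\<bar>" by (metis abs_ge_self abs_mult)
      also have "\<dots> \<le> \<bar>l\<bar> * (2*B)" using hb[OF y] Eb by (intro mult_left_mono) auto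
      finally show "\<bar>exp (l * (h y - E)) * exp (l\<^sup>2 * s1 / 8)\<bar> \<le> exp (\<bar>l\<bar> * (2*B)) * exp (l\<^sup>2 * s1 / 8)"
        by (simp add: abs_mult)
    qed (simp_all add: pfm[OF P2])
    fix y assume y: "y \<in> space M2"
    have "(\<integral>x. exp (l * (f (x, y) - E)) \<partial>M1) = (\<integral>x. exp (l * (f (x, y) - h y)) * exp (l * (h y - E)) \<partial>M1)"
      by (intro Bochner_Integration.integral_cong) (auto simp: algebra_simps simp flip: exp_add)
    also have "\<dots> = (\<integral>x. exp (l * (f (x, y) - h y)) \<partial>M1) * exp (l * (h y - E))"
      by simp
    also have "\<dots> \<le> exp (l\<^sup>2 * s1 / 8) * exp (l * (h y - E))"
      using inner[OF y] unfolding mgf_bd_def h_def by (intro mult_right_mono) auto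
    finally show "(\<integral>x. exp (l * (f (x, y) - E)) \<partial>M1) \<le> exp (l * (h y - E)) * exp (l\<^sup>2 * s1 / 8)"
      by (simp add: mult.commute)
  qed
  also have "\<dots> = (\<integral>y. exp (l * (h y - (\<integral>y. h y \<partial>M2))) \<partial>M2) * exp (l\<^sup>2 * s1 / 8)"
    by (simp add: Eh)
  also have "\<dots> \<le> exp (l\<^sup>2 * s2 / 8) * exp (l\<^sup>2 * s1 / 8)"
    using outer unfolding mgf_bd_def h_def by (intro mult_right_mono) auto
  also have "\<dots> = exp (l\<^sup>2 * (s1 + s2) / 8)"
    by (simp flip: exp_add add: algebra_simps add_divide_distrib)
  finally show "(\<integral>z. exp (l * (f z - (\<integral>y. f y \<partial>(M1 \<Otimes>\<^sub>M M2)))) \<partial>(M1 \<Otimes>\<^sub>M M2)) \<le> exp (l\<^sup>2 * (s1 + s2) / 8)"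
    unfolding E_def .
qed

lemma hoeff_pos:
  fixes g :: "'a \<Rightarrow> real"
  assumes P: "prob_space M" and gm[measurable]: "g \<in> borel_measurable M"
    and ab: "\<And>x. x \<in> space M \<Longrightarrow> a \<le> g x \<and> g x \<le> b" and l: "l > 0"
  shows "(\<integral>x. exp (l * (g x - (\<integral>y. g y \<partial>M))) \<partial>M) \<le> exp (l\<^sup>2 * (b - a)\<^sup>2 / 8)"
proof -
  interpret prob_space M by fact
  interpret ib: interval_bounded_random_variable M g a b
    by unfold_locales (use ab in auto)
  have int: "integrable M g" by (rule ib.integrable)
  have bd: "\<bar>g x\<bar> \<le> \<bar>a\<bar> + \<bar>b\<bar>" if "x \<in> space M" for x using ab[OF that] by auto
  have Eb: "\<bar>(\<integral>y. g y \<partial>M)\<bar> \<le> \<bar>a\<bar> + \<bar>b\<bar>" using bd by (intro int_abs_le) (auto simp: P)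
  have int2: "integrable M (\<lambda>x. exp (l * (g x - (\<integral>y. g y \<partial>M))))"
  proof (rule bnd_int[where B="exp (l * (2 * (\<bar>a\<bar> + \<bar>b\<bar>)))"])
    fix x assume x: "x \<in> space M"
    have "l * (g x - (\<integral>y. g y \<partial>M)) \<le> l * (2 * (\<bar>a\<bar> + \<bar>b\<bar>))"
      using bd[OF x] Eb l by (intro mult_left_mono) auto
    thus "\<bar>exp (l * (g x - (\<integral>y. g y \<partial>M)))\<bar> \<le> exp (l * (2 * (\<bar>a\<bar> + \<bar>b\<bar>)))" by simp
  qed (simp_all add: pfm[OF P])
  have "ennreal (\<integral>x. exp (l * (g x - (\<integral>y. g y \<partial>M))) \<partial>M) = (\<integral>\<^sup>+x. exp (l * (g x - (\<integral>y. g y \<partial>M))) \<partial>M)"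
    using int2 by (intro nn_integral_eq_integral[symmetric]) auto
  also have "\<dots> \<le> ennreal (exp (l\<^sup>2 * (b - a)\<^sup>2 / 8))"
    by (rule ib.Hoeffdings_lemma_nn_integral[OF l])
  finally show ?thesis by (subst (asm) ennreal_le_iff) auto
qed

lemma hoeff_mgf:
  fixes g :: "'a \<Rightarrow> real"
  assumes P: "prob_space M" and gm[measurable]: "g \<in> borel_measurable M"
    and ab: "\<And>x. x \<in> space M \<Longrightarrow> a \<le> g x \<and> g x \<le> a + c"
  shows "mgf_bd M g (c\<^sup>2)"
  unfolding mgf_bd_def
proof
  fix l :: real
  interpret prob_space M by fact
  consider "l > 0" | "l = 0" | "l < 0" by linarith
  then show "(\<integral>x. exp (l * (g x - (\<integral>y. g y \<partial>M))) \<partial>M) \<le> exp (l\<^sup>2 * c\<^sup>2 / 8)"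
  proof cases
    case 1
    show ?thesis using hoeff_pos[OF P gm ab 1] by simp
  next
    case 2
    then show ?thesis by (simp add: prob_space)
  next
    case 3
    have "(\<integral>x. exp ((-l) * ((- g x) - (\<integral>y. - g y \<partial>M))) \<partial>M) \<le> exp ((-l)\<^sup>2 * ((-a) - (-a-c))\<^sup>2 / 8)"
      using 3 ab by (intro hoeff_pos[OF P]) (auto, smt (verit))
    then show ?thesis by (simp add: algebra_simps)
  qed
qed

lemma hoeff_mgf':
  fixes g :: "'a \<Rightarrow> real"
  assumes P: "prob_space M" and gm[measurable]: "g \<in> borel_measurable M"
    and gb: "\<And>x. x \<in> space M \<Longrightarrow> \<bar>g x\<bar> \<le> B"
    and gd: "\<And>x y. x \<in> space M \<Longrightarrow> y \<in> space M \<Longrightarrow> \<bar>g x - g y\<bar> \<le> c"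
  shows "mgf_bd M g (c\<^sup>2)"
proof -
  interpret prob_space M by fact
  define a where "a = Inf (g ` space M)"
  have ne: "g ` space M \<noteq> {}" using not_empty by auto
  have bb: "bdd_below (g ` space M)" using gb by (intro bdd_belowI[where m="-B"]) (auto, smt (verit))
  show ?thesis
  proof (rule hoeff_mgf[OF P gm])
    fix x assume x: "x \<in> space M"
    have "a \<le> g x" unfolding a_def using x bb by (intro cInf_lower) auto
    moreover have "g x - c \<le> a" unfolding a_def using ne gd[OF x]
      by (intro cInf_greatest) (auto, smt (verit))
    ultimately show "a \<le> g x \<and> g x \<le> a + c" by simp
  qed
qed

lemma mgf_distr:
  fixes f :: "'b \<Rightarrow> real"
  assumes phi[measurable]: "phi \<in> measurable N M'" and fm[measurable]: "f \<in> borel_measurable M'"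
    and m: "mgf_bd N (\<lambda>x. f (phi x)) s"
  shows "mgf_bd (distr N M' phi) f s"
  unfolding mgf_bd_def
proof
  fix l :: real
  have e: "(\<integral>y. f y \<partial>distr N M' phi) = (\<integral>y. f (phi y) \<partial>N)"
    by (rule integral_distr) simp_all
  show "(\<integral>x. exp (l * (f x - (\<integral>y. f y \<partial>distr N M' phi))) \<partial>distr N M' phi) \<le> exp (l\<^sup>2 * s / 8)"
    unfolding e using m unfolding mgf_bd_def by (subst integral_distr) simp_all
qed



lemma mcd_pi:
  fixes f :: "('i \<Rightarrow> 'b) \<Rightarrow> real" and c :: "'i \<Rightarrow> real"
  assumes fin: "finite I"
    and P: "\<forall>i\<in>I. prob_space (M i)"
    and fm: "f \<in> borel_measurable (PiM I M)"
    and fb: "\<forall>x\<in>space (PiM I M). \<bar>f x\<bar> \<le> B"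
    and fd: "\<forall>x\<in>space (PiM I M). \<forall>i\<in>I. \<forall>z\<in>space (M i). \<bar>f (x(i:=z)) - f x\<bar> \<le> c i"
  shows "mgf_bd (PiM I M) f (\<Sum>i\<in>I. (c i)\<^sup>2)"
  using fin P fm fb fd
proof (induction I arbitrary: f B rule: finite_induct)
  case empty
  show ?case
    unfolding mgf_bd_def PiM_empty by (simp add: lebesgue_integral_count_space_finite)
next
  case (insert i I)
  note fm[measurable] = insert.prems(2)
  have Pi: "prob_space (M i)" using insert.prems by auto
  have PI: "prob_space (PiM I M)" using insert.prems by (intro prob_space_PiM) auto
  interpret pi: prob_space "M i" by fact
  interpret pI: prob_space "PiM I M" by fact
  have phim[measurable]: "(\<lambda>z. (snd z)(i := fst z)) \<in> measurable (M i \<Otimes>\<^sub>M PiM I M) (PiM (insert i I) M)"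
    by (rule measurable_fun_upd[where J=I]) auto
  have dist: "distr (M i \<Otimes>\<^sub>M PiM I M) (PiM (insert i I) M) (\<lambda>z. (snd z)(i := fst z)) = PiM (insert i I) M"
    using distr_pair_PiM_eq_PiM[of I M i] insert.prems by (simp add: case_prod_unfold)
  define g where "g z = f ((snd z)(i := fst z))" for z
  have gm[measurable]: "g \<in> borel_measurable (M i \<Otimes>\<^sub>M PiM I M)" unfolding g_def by measurable
  have upd_sp: "X(i := x) \<in> space (PiM (insert i I) M)" if "X \<in> space (PiM I M)" "x \<in> space (M i)" for X x
    using that by (simp add: space_PiM PiE_fun_upd)
  have gb: "\<bar>g z\<bar> \<le> B" if "z \<in> space (M i \<Otimes>\<^sub>M PiM I M)" for z
    using that insert.prems(3) upd_sp unfolding g_def by (auto simp: space_pair_measure)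
  define h where "h X = (\<integral>x. g (x, X) \<partial>M i)" for X
  have hm[measurable]: "h \<in> borel_measurable (PiM I M)" unfolding h_def by measurable
  have hb: "\<forall>X\<in>space (PiM I M). \<bar>h X\<bar> \<le> B"
    unfolding h_def using gb by (auto intro!: int_abs_le simp: Pi space_pair_measure)
  have hd: "\<forall>X\<in>space (PiM I M). \<forall>j\<in>I. \<forall>z\<in>space (M j). \<bar>h (X(j:=z)) - h X\<bar> \<le> c j"
  proof (intro ballI)
    fix X j z assume X: "X \<in> space (PiM I M)" and j: "j \<in> I" and z: "z \<in> space (M j)"
    have Xz: "X(j:=z) \<in> space (PiM I M)" using X z j by (auto simp: space_PiM PiE_iff extensional_def)
    have ij: "i \<noteq> j" using j insert.hyps by auto
    have i1: "integrable (M i) (\<lambda>x. g (x, X(j:=z)))"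
      using gb Xz by (intro bnd_int[where B=B]) (auto simp: pfm[OF Pi] space_pair_measure)
    have i2: "integrable (M i) (\<lambda>x. g (x, X))"
      using gb X by (intro bnd_int[where B=B]) (auto simp: pfm[OF Pi] space_pair_measure)
    have "h (X(j:=z)) - h X = (\<integral>x. g (x, X(j:=z)) - g (x, X) \<partial>M i)"
      unfolding h_def using i1 i2 by simp
    also have "\<bar>\<dots>\<bar> \<le> c j"
    proof (rule int_abs_le[OF Pi])
      show "(\<lambda>x. g (x, X(j:=z)) - g (x, X)) \<in> borel_measurable (M i)"
        using Xz X by measurable
      fix x assume x: "x \<in> space (M i)"
      have "g (x, X(j:=z)) = f ((X(i:=x))(j:=z))" unfolding g_def using ij by (simp add: fun_upd_twist)
      moreover have "g (x, X) = f (X(i:=x))" unfolding g_def by simp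
      moreover have "\<bar>f ((X(i:=x))(j:=z)) - f (X(i:=x))\<bar> \<le> c j"
        using insert.prems(4) upd_sp[OF X x] j z by blast
      ultimately show "\<bar>g (x, X(j:=z)) - g (x, X)\<bar> \<le> c j" by simp
    qed
    finally show "\<bar>h (X(j:=z)) - h X\<bar> \<le> c j" .
  qed
  have IH: "mgf_bd (PiM I M) h (\<Sum>i\<in>I. (c i)\<^sup>2)"
    using insert.IH[OF _ hm hb hd] insert.prems(1) by auto
  have inner: "mgf_bd (M i) (\<lambda>x. g (x, X)) ((c i)\<^sup>2)" if X: "X \<in> space (PiM I M)" for X
  proof (rule hoeff_mgf'[OF Pi, where B=B])
    show "(\<lambda>x. g (x, X)) \<in> borel_measurable (M i)" using X by measurable
    fix x y assume x: "x \<in> space (M i)" and y: "y \<in> space (M i)"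
    show "\<bar>g (x, X)\<bar> \<le> B" using gb x X by (auto simp: space_pair_measure)
    have "\<bar>f ((X(i:=y))(i:=x)) - f (X(i:=y))\<bar> \<le> c i"
      using insert.prems(4) upd_sp[OF X y] x by blast
    then show "\<bar>g (x, X) - g (y, X)\<bar> \<le> c i" unfolding g_def by simp
  qed
  have "mgf_bd (M i \<Otimes>\<^sub>M PiM I M) g ((c i)\<^sup>2 + (\<Sum>i\<in>I. (c i)\<^sup>2))"
    by (rule step_S[OF Pi PI gm, where B=B]) (use gb inner IH[unfolded h_def] in auto)
  then have "mgf_bd (distr (M i \<Otimes>\<^sub>M PiM I M) (PiM (insert i I) M) (\<lambda>z. (snd z)(i := fst z))) f ((c i)\<^sup>2 + (\<Sum>i\<in>I. (c i)\<^sup>2))"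
    by (intro mgf_distr) (simp_all add: g_def[abs_def])
  then show ?case using insert.hyps by (simp add: dist)
qed



lemma mgf_neg:
  assumes "mgf_bd M f s" shows "mgf_bd M (\<lambda>x. - f x) s"
  unfolding mgf_bd_def
proof
  fix l :: real
  have "(\<integral>x. exp ((-l) * (f x - (\<integral>y. f y \<partial>M))) \<partial>M) \<le> exp ((-l)\<^sup>2 * s / 8)"
    using assms unfolding mgf_bd_def by blast
  then show "(\<integral>x. exp (l * (- f x - (\<integral>y. - f y \<partial>M))) \<partial>M) \<le> exp (l\<^sup>2 * s / 8)"
    by (simp add: algebra_simps)
qed

lemma chernoff_mgf:
  fixes f :: "'a \<Rightarrow> real"
  assumes P: "prob_space M" and fm[measurable]: "f \<in> borel_measurable M"
    and fb: "\<And>x. x \<in> space M \<Longrightarrow> \<bar>f x\<bar> \<le> B"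
    and mg: "mgf_bd M f s" and s: "s > 0" and e: "\<epsilon> > 0"
  shows "measure M {x \<in> space M. f x - (\<integral>y. f y \<partial>M) \<ge> \<epsilon>} \<le> exp (- 2 * \<epsilon>\<^sup>2 / s)"
proof -
  interpret prob_space M by fact
  define E where "E = (\<integral>y. f y \<partial>M)"
  define l where "l = 4 * \<epsilon> / s"
  have l: "l > 0" using s e by (simp add: l_def)
  define S where "S = {x \<in> space M. f x - E \<ge> \<epsilon>}"
  have Sm: "S \<in> sets M" unfolding S_def by measurable
  have Eb: "\<bar>E\<bar> \<le> B" unfolding E_def using fb by (intro int_abs_le) (auto simp: P)
  have int: "integrable M (\<lambda>x. exp (l * (f x - E)))"
  proof (rule bnd_int[where B="exp (l * (2 * B))"])
    fix x assume x: "x \<in> space M"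
    have "l * (f x - E) \<le> l * (2 * B)"
      using fb[OF x] Eb l by (intro mult_left_mono) auto
    thus "\<bar>exp (l * (f x - E))\<bar> \<le> exp (l * (2 * B))" by simp
  qed (simp_all add: pfm[OF P])
  have "measure M S = (\<integral>x. indicator S x \<partial>M)" using Sm by simp
  also have "\<dots> \<le> (\<integral>x. exp (l * (f x - E)) * exp (- l * \<epsilon>) \<partial>M)"
  proof (rule integral_mono)
    show "integrable M (indicator S :: 'a \<Rightarrow> real)" using Sm by (simp add: integrable_indicator_iff less_top[symmetric])
    show "integrable M (\<lambda>x. exp (l * (f x - E)) * exp (- l * \<epsilon>))" using int by simp
    fix x assume x: "x \<in> space M"
    show "indicator S x \<le> exp (l * (f x - E)) * exp (- l * \<epsilon>)"
    proof (cases "x \<in> S")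
      case True
      then have "\<epsilon> \<le> f x - E" unfolding S_def by simp
      then have "l * \<epsilon> \<le> l * (f x - E)" using l by (intro mult_left_mono) auto
      then have "0 \<le> l * (f x - E) + (- l * \<epsilon>)" by simp
      then have "1 \<le> exp (l * (f x - E) + (- l * \<epsilon>))" by (subst one_le_exp_iff)
      also have "\<dots> = exp (l * (f x - E)) * exp (- l * \<epsilon>)" by (rule mult_exp_exp[symmetric])
      finally show ?thesis using True by simp
    next
      case False then show ?thesis by simp
    qed
  qed
  also have "\<dots> = (\<integral>x. exp (l * (f x - E)) \<partial>M) * exp (- l * \<epsilon>)" by simp
  also have "\<dots> \<le> exp (l\<^sup>2 * s / 8) * exp (- l * \<epsilon>)"
    using mg unfolding mgf_bd_def E_def by (intro mult_right_mono) auto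
  also have "\<dots> = exp (l\<^sup>2 * s / 8 - l * \<epsilon>)" by (simp add: mult_exp_exp)
  also have "l\<^sup>2 * s / 8 - l * \<epsilon> = - 2 * \<epsilon>\<^sup>2 / s"
    using s by (simp add: l_def field_simps power2_eq_square)
  finally show ?thesis unfolding S_def E_def .
qed

lemma chernoff_two:
  fixes f :: "'a \<Rightarrow> real"
  assumes P: "prob_space M" and fm[measurable]: "f \<in> borel_measurable M"
    and fb: "\<And>x. x \<in> space M \<Longrightarrow> \<bar>f x\<bar> \<le> B"
    and mg: "mgf_bd M f s" and s: "s > 0" and e: "\<epsilon> > 0"
  shows "measure M {x \<in> space M. \<bar>f x - (\<integral>y. f y \<partial>M)\<bar> \<ge> \<epsilon>} \<le> 2 * exp (- 2 * \<epsilon>\<^sup>2 / s)"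
proof -
  interpret prob_space M by fact
  have 1: "measure M {x \<in> space M. f x - (\<integral>y. f y \<partial>M) \<ge> \<epsilon>} \<le> exp (- 2 * \<epsilon>\<^sup>2 / s)"
    by (rule chernoff_mgf[OF P fm fb mg s e])
  have 2: "measure M {x \<in> space M. - f x - (\<integral>y. - f y \<partial>M) \<ge> \<epsilon>} \<le> exp (- 2 * \<epsilon>\<^sup>2 / s)"
    by (rule chernoff_mgf[OF P _ _ mgf_neg[OF mg] s e, where B=B]) (use fb in auto)
  have "{x \<in> space M. \<bar>f x - (\<integral>y. f y \<partial>M)\<bar> \<ge> \<epsilon>} =
        {x \<in> space M. f x - (\<integral>y. f y \<partial>M) \<ge> \<epsilon>} \<union> {x \<in> space M. - f x - (\<integral>y. - f y \<partial>M) \<ge> \<epsilon>}"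
    by auto
  then have "measure M {x \<in> space M. \<bar>f x - (\<integral>y. f y \<partial>M)\<bar> \<ge> \<epsilon>} \<le>
      measure M {x \<in> space M. f x - (\<integral>y. f y \<partial>M) \<ge> \<epsilon>} + measure M {x \<in> space M. - f x - (\<integral>y. - f y \<partial>M) \<ge> \<epsilon>}"
    by (simp add: measure_Un_le)
  with 1 2 show ?thesis by simp
qed



lemma comp_meas:
  fixes P :: "'a::euclidean_space measure"
  assumes "sets P = sets borel" "i < D"
  shows "(\<lambda>\<omega>. \<omega> i) \<in> measurable (PiM {..<D} (\<lambda>_. P)) borel"
proof -
  have "(\<lambda>\<omega>. \<omega> i) \<in> measurable (PiM {..<D} (\<lambda>_. P)) P"
    using assms(2) by (intro measurable_component_singleton) auto
  moreover have "measurable (PiM {..<D} (\<lambda>_. P)) P = measurable (PiM {..<D} (\<lambda>_. P)) borel"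
    by (rule measurable_cong_sets[OF refl assms(1)])
  ultimately show ?thesis by metis
qed

lemma F_meas:
  fixes P :: "'a::euclidean_space measure" and k :: "'a \<Rightarrow> real"
  assumes Ps: "sets P = sets borel" and kc: "continuous_on UNIV k"
  shows "(\<lambda>(w, p). (rff_f k D w p)\<^sup>2) \<in> borel_measurable (rff_space P D \<Otimes>\<^sub>M (borel \<Otimes>\<^sub>M borel))"
proof -
  have km[measurable]: "k \<in> borel_measurable borel" using kc by (rule borel_measurable_continuous_onI)
  have c1[measurable]: "(\<lambda>z. fst (fst z) i) \<in> borel_measurable (rff_space P D \<Otimes>\<^sub>M (borel \<Otimes>\<^sub>M borel))" if "i < D" for i
    unfolding rff_space_def using comp_meas[OF Ps that] by measurable
  have c2[measurable]: "(\<lambda>z. snd (fst z) i) \<in> borel_measurable (rff_space P D \<Otimes>\<^sub>M (borel \<Otimes>\<^sub>M borel))" if "i < D" for i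
  proof -
    have "(\<lambda>\<omega>. \<omega> i) \<in> measurable (PiM {..<D} (\<lambda>_. uniform_measure lborel {0..2*pi})) borel"
      using comp_meas[of "uniform_measure lborel {0..2*pi}" i D] that by simp
    then show ?thesis unfolding rff_space_def by measurable
  qed
  have "(\<lambda>z. (\<Sum>i<D. rff_z D (fst z) (fst (snd z)) i * rff_z D (fst z) (snd (snd z)) i)
          - k (fst (snd z) - snd (snd z))) \<in> borel_measurable (rff_space P D \<Otimes>\<^sub>M (borel \<Otimes>\<^sub>M borel))"
    unfolding rff_z_def
  proof (intro borel_measurable_diff borel_measurable_sum)
    fix i assume "i \<in> {..<D}"
    then have [measurable]: "(\<lambda>z. fst (fst z) i) \<in> borel_measurable (rff_space P D \<Otimes>\<^sub>M (borel \<Otimes>\<^sub>M borel))"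
       "(\<lambda>z. snd (fst z) i) \<in> borel_measurable (rff_space P D \<Otimes>\<^sub>M (borel \<Otimes>\<^sub>M borel))" using c1 c2 by auto
    show "(\<lambda>z. sqrt (2 / real D) * cos (fst (fst z) i \<bullet> fst (snd z) + snd (fst z) i) *
             (sqrt (2 / real D) * cos (fst (fst z) i \<bullet> snd (snd z) + snd (fst z) i)))
          \<in> borel_measurable (rff_space P D \<Otimes>\<^sub>M (borel \<Otimes>\<^sub>M borel))" by measurable
  qed measurable
  then show ?thesis unfolding rff_f_def by (simp add: case_prod_unfold)
qed

lemma term_eq:
  "rff_z D w x i * rff_z D w y i = 2 / real D * (cos (fst w i \<bullet> x + snd w i) * cos (fst w i \<bullet> y + snd w i))"
proof -
  have "sqrt (2 / real D) * sqrt (2 / real D) = 2 / real D" by simp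
  moreover have "sqrt (2 / real D) * c1 * (sqrt (2 / real D) * c2) = (sqrt (2 / real D) * sqrt (2 / real D)) * (c1 * c2)" for c1 c2 :: real
    by (simp only: mult_ac)
  ultimately show ?thesis unfolding rff_z_def by simp
qed

lemma term_bd: "\<bar>rff_z D w x i * rff_z D w y i\<bar> \<le> 2 / real D"
proof -
  have c: "\<bar>cos (fst w i \<bullet> x + snd w i) * cos (fst w i \<bullet> y + snd w i)\<bar> \<le> 1"
    by (simp add: abs_mult mult_le_one)
  have "\<bar>rff_z D w x i * rff_z D w y i\<bar> = 2 / real D * \<bar>cos (fst w i \<bullet> x + snd w i) * cos (fst w i \<bullet> y + snd w i)\<bar>"
    unfolding term_eq by (simp add: abs_mult)
  also have "\<dots> \<le> 2 / real D" by (rule mult_left_le[OF c]) simp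
  finally show ?thesis .
qed

lemma aux_half: "\<bar>a\<bar> \<le> 1 \<Longrightarrow> \<bar>b\<bar> \<le> 1 \<Longrightarrow> \<bar>(a - b) / 2\<bar> \<le> (1::real)"
  by (simp add: abs_le_iff)

lemma cc_diff: "\<bar>cos (u + b) * cos (v + b) - cos (u + b') * cos (v + b')\<bar> \<le> (1::real)"
proof -
  have e: "cos (u + c) * cos (v + c) = (cos (u - v) + cos (u + v + 2 * c)) / 2" for c :: real
  proof -
    have "cos (u + c) * cos (v + c) = (cos ((u + c) - (v + c)) + cos ((u + c) + (v + c))) / 2"
      by (rule cos_times_cos)
    also have "(u + c) - (v + c) = u - v" by simp
    also have "(u + c) + (v + c) = u + v + 2 * c" by simp
    finally show ?thesis .
  qed
  have h: "(cos (u - v) + cos (u + v + 2 * b)) / 2 - (cos (u - v) + cos (u + v + 2 * b')) / 2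
     = (cos (u + v + 2 * b) - cos (u + v + 2 * b')) / 2" by (simp add: add_divide_distrib diff_divide_distrib)
  show ?thesis unfolding e h
    by (rule aux_half[OF abs_cos_le_one abs_cos_le_one])
qed

lemma term_diff_b:
  assumes "fst w i = fst w' i"
  shows "\<bar>rff_z D w x i * rff_z D w y i - rff_z D w' x i * rff_z D w' y i\<bar> \<le> 2 / real D"
proof -
  have e: "rff_z D w x i * rff_z D w y i - rff_z D w' x i * rff_z D w' y i
      = 2 / real D * (cos (fst w i \<bullet> x + snd w i) * cos (fst w i \<bullet> y + snd w i) - cos (fst w i \<bullet> x + snd w' i) * cos (fst w i \<bullet> y + snd w' i))"
    unfolding term_eq using assms by (simp add: algebra_simps)
  have "2 / real D * \<bar>cos (fst w i \<bullet> x + snd w i) * cos (fst w i \<bullet> y + snd w i) - cos (fst w i \<bullet> x + snd w' i) * cos (fst w i \<bullet> y + snd w' i)\<bar> \<le> 2 / real D"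
    by (rule mult_left_le[OF cc_diff]) simp
  then show ?thesis unfolding e abs_mult by simp
qed

lemma S_bd: "\<bar>\<Sum>i<D. rff_z D w x i * rff_z D w y i\<bar> \<le> 2"
proof -
  have "\<bar>\<Sum>i<D. rff_z D w x i * rff_z D w y i\<bar> \<le> (\<Sum>i<D. \<bar>rff_z D w x i * rff_z D w y i\<bar>)"
    by (rule sum_abs)
  also have "\<dots> \<le> (\<Sum>i<D. 2 / real D)" by (intro sum_mono term_bd)
  also have "\<dots> \<le> 2" by (cases "D = 0") auto
  finally show ?thesis .
qed

lemma F_bd:
  assumes "\<And>d. \<bar>k d\<bar> \<le> 1"
  shows "\<bar>rff_f k D w p\<bar> \<le> 3"
  using S_bd[of D w "fst p" "snd p"] assms[of "fst p - snd p"] unfolding rff_f_def by linarith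

lemma F_diff:
  assumes i: "i < D" and ag: "\<And>j. j < D \<Longrightarrow> j \<noteq> i \<Longrightarrow> fst w j = fst w' j \<and> snd w j = snd w' j"
  shows "rff_f k D w p - rff_f k D w' p =
     rff_z D w (fst p) i * rff_z D w (snd p) i - rff_z D w' (fst p) i * rff_z D w' (snd p) i"
proof -
  have s: "(\<Sum>j<D. g j) = g i + (\<Sum>j\<in>{..<D}-{i}. g j)" for g :: "nat \<Rightarrow> real"
    using i by (subst sum.remove[of _ i]) auto
  have "(\<Sum>j\<in>{..<D}-{i}. rff_z D w (fst p) j * rff_z D w (snd p) j) =
        (\<Sum>j\<in>{..<D}-{i}. rff_z D w' (fst p) j * rff_z D w' (snd p) j)"
    using ag by (intro sum.cong) (auto simp: rff_z_def)
  then show ?thesis unfolding rff_f_def s by simp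
qed

lemma sq_diff:
  fixes a b :: real
  assumes "\<bar>a\<bar> \<le> 3" "\<bar>b\<bar> \<le> 3" "\<bar>a - b\<bar> \<le> d"
  shows "\<bar>a\<^sup>2 - b\<^sup>2\<bar> \<le> 6 * d"
proof -
  have "\<bar>a\<^sup>2 - b\<^sup>2\<bar> = \<bar>a - b\<bar> * \<bar>a + b\<bar>" by (simp add: power2_eq_square algebra_simps flip: abs_mult)
  also have "\<dots> \<le> d * 6" using assms by (intro mult_mono) auto
  finally show ?thesis by simp
qed

lemma G_diff_w:
  assumes kb: "\<And>d. \<bar>k d\<bar> \<le> 1" and i: "i < D"
    and ag: "\<And>j. j < D \<Longrightarrow> j \<noteq> i \<Longrightarrow> fst w j = fst w' j \<and> snd w j = snd w' j"
  shows "\<bar>(rff_f k D w p)\<^sup>2 - (rff_f k D w' p)\<^sup>2\<bar> \<le> 24 / real D"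
proof -
  have "\<bar>rff_f k D w p - rff_f k D w' p\<bar> \<le> 2 / real D + 2 / real D"
    using F_diff[OF i ag, of k p] term_bd[of D w "fst p" i "snd p"] term_bd[of D w' "fst p" i "snd p"]
    by linarith
  then have "\<bar>(rff_f k D w p)\<^sup>2 - (rff_f k D w' p)\<^sup>2\<bar> \<le> 6 * (2 / real D + 2 / real D)"
    by (intro sq_diff F_bd kb)
  then show ?thesis by simp
qed

lemma G_diff_b:
  assumes kb: "\<And>d. \<bar>k d\<bar> \<le> 1" and i: "i < D"
    and ag: "\<And>j. j < D \<Longrightarrow> j \<noteq> i \<Longrightarrow> fst w j = fst w' j \<and> snd w j = snd w' j"
    and fe: "fst w i = fst w' i"
  shows "\<bar>(rff_f k D w p)\<^sup>2 - (rff_f k D w' p)\<^sup>2\<bar> \<le> 12 / real D"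
proof -
  have "\<bar>rff_f k D w p - rff_f k D w' p\<bar> \<le> 2 / real D"
    using F_diff[OF i ag, of k p] term_diff_b[OF fe, of D "fst p" "snd p"] by simp
  then have "\<bar>(rff_f k D w p)\<^sup>2 - (rff_f k D w' p)\<^sup>2\<bar> \<le> 6 * (2 / real D)"
    by (intro sq_diff F_bd kb)
  then show ?thesis by simp
qed



lemma fin_int_bound:
  fixes g :: "'a \<Rightarrow> real"
  assumes "finite_measure M" "g \<in> borel_measurable M" "\<And>x. x \<in> space M \<Longrightarrow> \<bar>g x\<bar> \<le> c"
  shows "\<bar>\<integral>x. g x \<partial>M\<bar> \<le> c * measure M (space M)"
proof -
  interpret finite_measure M by fact
  have i: "integrable M g" using assms by (intro bnd_int) auto
  have "\<bar>\<integral>x. g x \<partial>M\<bar> \<le> (\<integral>x. \<bar>g x\<bar> \<partial>M)" by (rule integral_abs_bound)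
  also have "\<dots> \<le> (\<integral>x. c \<partial>M)" using i assms(3) by (intro integral_mono) auto
  also have "\<dots> = c * measure M (space M)" by simp
  finally show ?thesis .
qed

lemma final_arith1:
  fixes D :: nat and e m :: real
  assumes "D > 0" "m > 0" "e > 0"
  shows "exp (- 2 * e\<^sup>2 / (real D * (24 / real D * m)\<^sup>2 + real D * (12 / real D * m)\<^sup>2))
     \<le> exp (- (real D ^ 3 * e\<^sup>2) / (512 * (real D + 1)\<^sup>2 * m\<^sup>2))"
proof -
  define q where "q = real D * e\<^sup>2 / m\<^sup>2"
  have q: "q > 0" unfolding q_def using assms by simp
  have d: "real D > 0" using assms by simp
  have e1: "2 * e\<^sup>2 / (real D * (24 / real D * m)\<^sup>2 + real D * (12 / real D * m)\<^sup>2) = q / 360"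
    unfolding q_def using d assms by (simp add: field_simps power2_eq_square)
  have e2: "real D ^ 3 * e\<^sup>2 / (512 * (real D + 1)\<^sup>2 * m\<^sup>2) = (real D)\<^sup>2 / (512 * (real D + 1)\<^sup>2) * q"
    unfolding q_def using d assms by (simp add: field_simps power2_eq_square power3_eq_cube)
  have sq: "(real D + 1)\<^sup>2 = real D * real D + 2 * real D + 1" by (simp add: power2_eq_square algebra_simps)
  have sq2: "(real D)\<^sup>2 = real D * real D" by (simp add: power2_eq_square)
  have d0: "0 \<le> real D * real D" by simp
  have h: "(real D)\<^sup>2 * 360 \<le> 512 * (real D + 1)\<^sup>2"
  proof -
    define X where "X = real D * real D"
    have "0 \<le> X" using d0 X_def by simp
    moreover have "512 * (X + 2 * real D + 1) = 512 * X + 1024 * real D + 512" by (simp add: algebra_simps)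
    ultimately have "X * 360 \<le> 512 * (X + 2 * real D + 1)" using d by linarith
    then show ?thesis unfolding sq sq2 X_def .
  qed
  have pos: "512 * (real D + 1)\<^sup>2 > 0" using d by simp
  have "(real D)\<^sup>2 / (512 * (real D + 1)\<^sup>2) \<le> 1 / 360"
    using h pos by (simp add: divide_le_eq)
  then have "(real D)\<^sup>2 / (512 * (real D + 1)\<^sup>2) * q \<le> 1 / 360 * q" using q by (intro mult_right_mono) auto
  then have le: "real D ^ 3 * e\<^sup>2 / (512 * (real D + 1)\<^sup>2 * m\<^sup>2) \<le> 2 * e\<^sup>2 / (real D * (24 / real D * m)\<^sup>2 + real D * (12 / real D * m)\<^sup>2)"
    unfolding e1 e2 by linarith
  have a1: "- 2 * e\<^sup>2 / (real D * (24 / real D * m)\<^sup>2 + real D * (12 / real D * m)\<^sup>2) = - (2 * e\<^sup>2 / (real D * (24 / real D * m)\<^sup>2 + real D * (12 / real D * m)\<^sup>2))"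
    by simp
  have a2: "- (real D ^ 3 * e\<^sup>2) / (512 * (real D + 1)\<^sup>2 * m\<^sup>2) = - (real D ^ 3 * e\<^sup>2 / (512 * (real D + 1)\<^sup>2 * m\<^sup>2))"
    by simp
  show ?thesis unfolding a1 a2 using le by simp
qed

lemma final_arith2:
  fixes D :: nat and e m :: real
  assumes "D > 0"
  shows "2 * exp (- (real D ^ 3 * e\<^sup>2) / (512 * (real D + 1)\<^sup>2 * m\<^sup>2))
     \<le> 2 * exp (- (real D * e\<^sup>2) / (2048 * m\<^sup>2))"
proof (cases "m = 0")
  case True then show ?thesis by simp
next
  case False
  define q where "q = real D * e\<^sup>2 / m\<^sup>2"
  have q: "q \<ge> 0" unfolding q_def by simp
  have d: "real D \<ge> 1" using assms by simp
  have e1: "real D * e\<^sup>2 / (2048 * m\<^sup>2) = q / 2048"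
    unfolding q_def using False by (simp add: field_simps)
  have e2: "real D ^ 3 * e\<^sup>2 / (512 * (real D + 1)\<^sup>2 * m\<^sup>2) = (real D)\<^sup>2 / (512 * (real D + 1)\<^sup>2) * q"
    unfolding q_def using d False by (simp add: field_simps power2_eq_square power3_eq_cube)
  have sq: "(real D + 1)\<^sup>2 = real D * real D + 2 * real D + 1" by (simp add: power2_eq_square algebra_simps)
  have sq2: "(real D)\<^sup>2 = real D * real D" by (simp add: power2_eq_square)
  have dd: "real D * 1 \<le> real D * real D" by (intro mult_left_mono) (use d in auto)
  have h: "512 * (real D + 1)\<^sup>2 \<le> 2048 * (real D)\<^sup>2"
  proof -
    define X where "X = real D * real D"
    have "real D \<le> X" using dd X_def by simp
    moreover have "512 * (X + 2 * real D + 1) = 512 * X + 1024 * real D + 512" by (simp add: algebra_simps)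
    ultimately have "512 * (X + 2 * real D + 1) \<le> 2048 * X" using d by linarith
    then show ?thesis unfolding sq sq2 X_def .
  qed
  have pos: "512 * (real D + 1)\<^sup>2 > 0" using d by simp
  have "1 / 2048 \<le> (real D)\<^sup>2 / (512 * (real D + 1)\<^sup>2)"
    using h pos by (simp add: le_divide_eq)
  then have "1 / 2048 * q \<le> (real D)\<^sup>2 / (512 * (real D + 1)\<^sup>2) * q" using q by (intro mult_right_mono) auto
  then have le: "real D * e\<^sup>2 / (2048 * m\<^sup>2) \<le> real D ^ 3 * e\<^sup>2 / (512 * (real D + 1)\<^sup>2 * m\<^sup>2)"
    unfolding e1 e2 by linarith
  have a1: "- (real D * e\<^sup>2) / (2048 * m\<^sup>2) = - (real D * e\<^sup>2 / (2048 * m\<^sup>2))"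
    by simp
  have a2: "- (real D ^ 3 * e\<^sup>2) / (512 * (real D + 1)\<^sup>2 * m\<^sup>2) = - (real D ^ 3 * e\<^sup>2 / (512 * (real D + 1)\<^sup>2 * m\<^sup>2))"
    by simp
  show ?thesis unfolding a1 a2 using le by simp
qed

theorem proposition8:
  fixes X :: "'a::euclidean_space set"
    and k :: "'a \<Rightarrow> real"
    and P :: "'a measure"
    and \<mu> :: "('a \<times> 'a) measure"
    and D :: nat
    and \<epsilon> :: real
  assumes k_cont: "continuous_on UNIV k"
    and k_pd: "positive_definite k"
    and k0: "k 0 = 1"
    and P_prob: "prob_space P"
    and P_sets: "sets P = sets borel"
    and P_bochner: "\<And>\<Delta>. complex_of_real (k \<Delta>) = (\<integral>\<omega>. cis (\<omega> \<bullet> \<Delta>) \<partial>P)"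
    and mu_sets: "sets \<mu> = sets (restrict_space borel (X \<times> X))"
    and mu_sigma: "sigma_finite_measure \<mu>"
    and mu_fin: "emeasure \<mu> (X \<times> X) < \<infinity>"
    and D_pos: "0 < D"
    and eps_pos: "0 < \<epsilon>"
  shows "let \<Omega> = rff_space P D;
             N = (\<lambda>w. sqnorm_mu \<mu> (rff_f k D w));
             M = measure \<mu> (X \<times> X)
         in measure \<Omega> {w \<in> space \<Omega>. \<bar>N w - (\<integral>w'. N w' \<partial>\<Omega>)\<bar> \<ge> \<epsilon>}
              \<le> 2 * exp (- (real D ^ 3 * \<epsilon>\<^sup>2) / (512 * (real D + 1)\<^sup>2 * M\<^sup>2))
          \<and> 2 * exp (- (real D ^ 3 * \<epsilon>\<^sup>2) / (512 * (real D + 1)\<^sup>2 * M\<^sup>2))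
              \<le> 2 * exp (- (real D * \<epsilon>\<^sup>2) / (2048 * M\<^sup>2))"
proof -
  define U where "U = uniform_measure lborel {0..2*pi}"
  define A where "A = PiM {..<D} (\<lambda>_. P)"
  define Bm where "Bm = PiM {..<D} (\<lambda>_. U)"
  have Om: "rff_space P D = A \<Otimes>\<^sub>M Bm" unfolding rff_space_def A_def Bm_def U_def ..
  interpret P: prob_space P by fact
  have PU: "prob_space U" unfolding U_def by (intro prob_space_uniform_measure) auto
  have PA: "prob_space A" unfolding A_def by (intro prob_space_PiM) (simp add: P_prob)
  have PB: "prob_space Bm" unfolding Bm_def by (intro prob_space_PiM) (simp add: PU)
  interpret pA: prob_space A by fact
  interpret pB: prob_space Bm by fact
  have PAB: "prob_space (A \<Otimes>\<^sub>M Bm)" by (rule prob_space_pair) (fact PA, fact PB)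
  have kb: "\<bar>k d\<bar> \<le> 1" for d
  proof -
    have "\<bar>k d\<bar> = cmod (complex_of_real (k d))" by simp
    also have "\<dots> = cmod (\<integral>\<omega>. cis (\<omega> \<bullet> d) \<partial>P)" using P_bochner by simp
    also have "\<dots> \<le> (\<integral>\<omega>. cmod (cis (\<omega> \<bullet> d)) \<partial>P)" by (rule integral_norm_bound)
    also have "\<dots> = 1" by (simp add: P.prob_space)
    finally show ?thesis .
  qed
  have sp: "space \<mu> = X \<times> X" using sets_eq_imp_space_eq[OF mu_sets] by (simp add: space_restrict_space)
  have finmu: "finite_measure \<mu>" by (rule finite_measureI) (use mu_fin sp in auto)
  define Mm where "Mm = measure \<mu> (X \<times> X)"
  have Mm0: "Mm \<ge> 0" unfolding Mm_def by simp
  have idmu: "(\<lambda>x. x) \<in> measurable \<mu> (borel \<Otimes>\<^sub>M borel)"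
  proof -
    have "(\<lambda>x. x) \<in> measurable (restrict_space borel (X \<times> X)) (borel :: ('a \<times> 'a) measure)"
      by (intro measurable_restrict_space1) simp
    then show ?thesis unfolding borel_prod using measurable_cong_sets[OF mu_sets refl] by metis
  qed
  have Gmu: "(\<lambda>p. (rff_f k D w p)\<^sup>2) \<in> borel_measurable \<mu>" for w
  proof -
    have km[measurable]: "k \<in> borel_measurable borel" using k_cont by (rule borel_measurable_continuous_onI)
    have "(\<lambda>p. (rff_f k D w p)\<^sup>2) \<in> borel_measurable (borel \<Otimes>\<^sub>M borel)"
      unfolding rff_f_def rff_z_def by measurable
    then show ?thesis using measurable_compose[OF idmu] by blast
  qed
  have Gb: "\<bar>(rff_f k D w p)\<^sup>2\<bar> \<le> 9" for w p
  proof -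
    have "\<bar>rff_f k D w p\<bar> \<le> 3" by (rule F_bd[OF kb])
    then have "\<bar>rff_f k D w p\<bar>\<^sup>2 \<le> 3\<^sup>2" by (intro power_mono) auto
    then show ?thesis by simp
  qed
  have joint: "(\<lambda>(w, p). (rff_f k D w p)\<^sup>2) \<in> borel_measurable ((A \<Otimes>\<^sub>M Bm) \<Otimes>\<^sub>M \<mu>)"
  proof -
    have f: "(\<lambda>(w, p). (rff_f k D w p)\<^sup>2) \<in> borel_measurable ((A \<Otimes>\<^sub>M Bm) \<Otimes>\<^sub>M (borel \<Otimes>\<^sub>M borel))"
      using F_meas[OF P_sets k_cont, of D] unfolding Om .
    have g: "(\<lambda>z. (fst z, snd z)) \<in> measurable ((A \<Otimes>\<^sub>M Bm) \<Otimes>\<^sub>M \<mu>) ((A \<Otimes>\<^sub>M Bm) \<Otimes>\<^sub>M (borel \<Otimes>\<^sub>M borel))"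
      by (intro measurable_Pair measurable_fst measurable_compose[OF measurable_snd idmu])
    show ?thesis using measurable_compose[OF g f] by (simp add: case_prod_unfold)
  qed
  define N where "N w = sqnorm_mu \<mu> (rff_f k D w)" for w
  have Nalt: "N w = (\<integral>p. (rff_f k D w p)\<^sup>2 \<partial>\<mu>)" for w unfolding N_def sqnorm_mu_def ..
  have Nm[measurable]: "N \<in> borel_measurable (A \<Otimes>\<^sub>M Bm)"
    unfolding Nalt[abs_def]
    by (rule sigma_finite_measure.borel_measurable_lebesgue_integral[OF mu_sigma]) (use joint in simp)
  have Nb: "\<bar>N w\<bar> \<le> 9 * Mm" for w
    unfolding Nalt Mm_def sp[symmetric] by (rule fin_int_bound[OF finmu Gmu]) (rule Gb)
  have Ndiff: "\<bar>N w - N w'\<bar> \<le> c * Mm" if "\<And>p. \<bar>(rff_f k D w p)\<^sup>2 - (rff_f k D w' p)\<^sup>2\<bar> \<le> c" for w w' c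
  proof -
    have i1: "integrable \<mu> (\<lambda>p. (rff_f k D w p)\<^sup>2)" by (rule bnd_int[OF finmu Gmu Gb])
    have i2: "integrable \<mu> (\<lambda>p. (rff_f k D w' p)\<^sup>2)" by (rule bnd_int[OF finmu Gmu Gb])
    have "N w - N w' = (\<integral>p. (rff_f k D w p)\<^sup>2 - (rff_f k D w' p)\<^sup>2 \<partial>\<mu>)"
      unfolding Nalt using i1 i2 by simp
    also have "\<bar>\<dots>\<bar> \<le> c * Mm"
      unfolding Mm_def sp[symmetric] by (rule fin_int_bound[OF finmu]) (use Gmu that in auto)
    finally show ?thesis .
  qed
  define c1 where "c1 = 24 / real D * Mm"
  define c2 where "c2 = 12 / real D * Mm"
  have inner: "mgf_bd A (\<lambda>\<omega>. N (\<omega>, b)) (\<Sum>i<D. c1\<^sup>2)" if b: "b \<in> space Bm" for b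
    unfolding A_def
  proof (rule mcd_pi[where B="9 * Mm"])
    show "(\<lambda>\<omega>. N (\<omega>, b)) \<in> borel_measurable (Pi\<^sub>M {..<D} (\<lambda>_. P))"
      using measurable_compose[OF measurable_Pair2'[OF b] Nm] unfolding A_def .
    show "\<forall>x\<in>space (Pi\<^sub>M {..<D} (\<lambda>_. P)). \<bar>N (x, b)\<bar> \<le> 9 * Mm" using Nb by auto
    show "\<forall>x\<in>space (Pi\<^sub>M {..<D} (\<lambda>_. P)). \<forall>i\<in>{..<D}. \<forall>z\<in>space P. \<bar>N (x(i := z), b) - N (x, b)\<bar> \<le> c1"
    proof (intro ballI)
      fix x i z assume i: "i \<in> {..<D}"
      show "\<bar>N (x(i := z), b) - N (x, b)\<bar> \<le> c1"
        unfolding c1_def by (rule Ndiff, rule G_diff_w[OF kb]) (use i in auto)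
    qed
  qed (use P_prob in auto)
  define h where "h b = (\<integral>\<omega>. N (\<omega>, b) \<partial>A)" for b
  have hm[measurable]: "h \<in> borel_measurable Bm"
  proof -
    have "(\<lambda>(b, \<omega>). N (\<omega>, b)) \<in> borel_measurable (Bm \<Otimes>\<^sub>M A)" by measurable
    then show ?thesis unfolding h_def
      by (rule sigma_finite_measure.borel_measurable_lebesgue_integral[rotated])
         (rule prob_space_imp_sigma_finite[OF PA])
  qed
  have outer: "mgf_bd Bm h (\<Sum>i<D. c2\<^sup>2)"
    unfolding Bm_def
  proof (rule mcd_pi[where B="9 * Mm"])
    show "h \<in> borel_measurable (Pi\<^sub>M {..<D} (\<lambda>_. U))" using hm unfolding Bm_def .
    show "\<forall>x\<in>space (Pi\<^sub>M {..<D} (\<lambda>_. U)). \<bar>h x\<bar> \<le> 9 * Mm"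
    proof
      fix b assume b: "b \<in> space (Pi\<^sub>M {..<D} (\<lambda>_. U))"
      show "\<bar>h b\<bar> \<le> 9 * Mm" unfolding h_def
        by (rule int_abs_le[OF PA]) (use b Nb in \<open>auto simp: Bm_def\<close>)
    qed
    show "\<forall>x\<in>space (Pi\<^sub>M {..<D} (\<lambda>_. U)). \<forall>i\<in>{..<D}. \<forall>z\<in>space U. \<bar>h (x(i := z)) - h x\<bar> \<le> c2"
    proof (intro ballI)
      fix b i z assume b: "b \<in> space (Pi\<^sub>M {..<D} (\<lambda>_. U))" and i: "i \<in> {..<D}" and z: "z \<in> space U"
      have b': "b \<in> space Bm" using b unfolding Bm_def .
      have bz: "b(i := z) \<in> space Bm" using b z i unfolding Bm_def
        by (auto simp: space_PiM PiE_iff extensional_def)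
      have i1: "integrable A (\<lambda>\<omega>. N (\<omega>, b(i:=z)))"
        using bz Nb by (intro bnd_int[where B="9*Mm"]) (auto simp: pfm[OF PA])
      have i2: "integrable A (\<lambda>\<omega>. N (\<omega>, b))"
        using b' Nb by (intro bnd_int[where B="9*Mm"]) (auto simp: pfm[OF PA])
      have "h (b(i := z)) - h b = (\<integral>\<omega>. N (\<omega>, b(i:=z)) - N (\<omega>, b) \<partial>A)"
        unfolding h_def using i1 i2 by simp
      also have "\<bar>\<dots>\<bar> \<le> c2"
      proof (rule int_abs_le[OF PA])
        show "(\<lambda>\<omega>. N (\<omega>, b(i:=z)) - N (\<omega>, b)) \<in> borel_measurable A"
          using bz b' by measurable
        fix \<omega>
        show "\<bar>N (\<omega>, b(i:=z)) - N (\<omega>, b)\<bar> \<le> c2"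
          unfolding c2_def by (rule Ndiff, rule G_diff_b[OF kb]) (use i in auto)
      qed
      finally show "\<bar>h (b(i := z)) - h b\<bar> \<le> c2" .
    qed
  qed (use PU in auto)
  have mg: "mgf_bd (A \<Otimes>\<^sub>M Bm) N ((\<Sum>i<D. c1\<^sup>2) + (\<Sum>i<D. c2\<^sup>2))"
    by (rule step_S[OF PA PB Nm, where B="9*Mm"]) (use Nb inner outer[unfolded h_def] in auto)
  have sval: "(\<Sum>i<D. c1\<^sup>2) + (\<Sum>i<D. c2\<^sup>2) = real D * (24 / real D * Mm)\<^sup>2 + real D * (12 / real D * Mm)\<^sup>2"
    unfolding c1_def c2_def by simp
  have main: "measure (A \<Otimes>\<^sub>M Bm) {w \<in> space (A \<Otimes>\<^sub>M Bm). \<bar>N w - (\<integral>w'. N w' \<partial>(A \<Otimes>\<^sub>M Bm))\<bar> \<ge> \<epsilon>}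
      \<le> 2 * exp (- (real D ^ 3 * \<epsilon>\<^sup>2) / (512 * (real D + 1)\<^sup>2 * Mm\<^sup>2))"
  proof (cases "Mm = 0")
    case True
    interpret pAB: prob_space "A \<Otimes>\<^sub>M Bm" by (rule PAB)
    have "measure (A \<Otimes>\<^sub>M Bm) {w \<in> space (A \<Otimes>\<^sub>M Bm). \<bar>N w - (\<integral>w'. N w' \<partial>(A \<Otimes>\<^sub>M Bm))\<bar> \<ge> \<epsilon>} \<le> 1"
      by (rule pAB.prob_le_1)
    moreover have "2 * exp (- (real D ^ 3 * \<epsilon>\<^sup>2) / (512 * (real D + 1)\<^sup>2 * Mm\<^sup>2)) = 2" using True by simp
    ultimately show ?thesis by linarith
  next
    case False
    then have Mp: "Mm > 0" using Mm0 by simp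
    have spos: "real D * (24 / real D * Mm)\<^sup>2 + real D * (12 / real D * Mm)\<^sup>2 > 0"
      using Mp D_pos by (intro add_pos_pos) auto
    have "measure (A \<Otimes>\<^sub>M Bm) {w \<in> space (A \<Otimes>\<^sub>M Bm). \<bar>N w - (\<integral>w'. N w' \<partial>(A \<Otimes>\<^sub>M Bm))\<bar> \<ge> \<epsilon>}
        \<le> 2 * exp (- 2 * \<epsilon>\<^sup>2 / (real D * (24 / real D * Mm)\<^sup>2 + real D * (12 / real D * Mm)\<^sup>2))"
      by (rule chernoff_two[OF PAB Nm _ mg[unfolded sval] spos eps_pos, where B="9*Mm"]) (rule Nb)
    also have "\<dots> \<le> 2 * exp (- (real D ^ 3 * \<epsilon>\<^sup>2) / (512 * (real D + 1)\<^sup>2 * Mm\<^sup>2))"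
      using final_arith1[OF D_pos Mp eps_pos] by simp
    finally show ?thesis .
  qed
  show ?thesis
    unfolding Let_def Om N_def[symmetric] Mm_def[symmetric]
    using main final_arith2[OF D_pos] by simp
qed


end
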